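(* Let $(L,\le,(\sqsubseteq_\alpha)_{\alpha<\kappa})$ be a model of Axioms 1–4. For all $x,y\in L$ and $\alpha<\kappa$: - $x=_\alpha y$ iff $x|_\alpha=_\alpha y|_\alpha$ iff $x|_\alpha=y|_\alpha$; - $x\sqsubset_\alpha y$ iff $x|_\alpha\sqsubset_\alpha y|_\alpha$; - $x\sqsubseteq_\alpha y$ iff $x|_\alpha\sqsubseteq_\alpha y|_\alpha$.
   Context: Setting (model of Axioms 1–4). Let $(L,\le)$ be a complete lattice with join operation $\bigvee$ and least element $\perp$. Let $\kappa>0$ be an ordinal, and for each ordinal $\alpha<\kappa$ let $\sqsubseteq_\alpha$ be a preorder on $L$. Derived relations: - $x=_\alpha y$ means $x\sqsubseteq_\alpha y$ and $y\sqsubseteq_\alpha x$. - $x\sqsubset_\alpha y$ means $x\sqsubseteq_\alpha y$ and not $x=_\alpha y$. Derived set, for $x\in L$ and $\alpha<\kappa$: $(x]_\alpha=\{y\in L:\forall\beta<\alpha,\ x=_\beta y\}$. For a set $X$, $X\sqsubseteq_\alpha y$ means $x\sqsubseteq_\alpha y$ for all $x\in X$. The structure is a model of Axioms 1–4 if: - (A1) for all $\alpha<\beta<\kappa$, $x\sqsubseteq_\beta y$ implies $x=_\alpha y$; - (A2) $\bigcap_{\alpha<\kappa}=_\alpha$ is the identity relation on $L$; - (A3) for every $x\in L$, every $\alpha<\kappa$ and every $X\subseteq(x]_\alpha$ there is $y\in(x]_\alpha$ with $X\sqsubseteq_\alpha y$ such that for all $z\in(x]_\alpha$ with $X\sqsubseteq_\alpha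 z$ we have $y\sqsubseteq_\alpha z$ and $y\le z$; - (A4) for every nonempty $X\subseteq L$, every $\alpha<\kappa$ and every $y\in L$, if $y=_\alpha x$ for all $x\in X$ then $y=_\alpha\bigvee X$. The element $y$ of (A3) is unique and is denoted $\bigsqcup_\alpha X$. The slice of $x$ at $\alpha$ is $x|_\alpha:=\bigsqcup_\alpha\{x\}$, where $\{x\}\subseteq(x]_\alpha$. *)

theory Defs
  imports Main
begin

text \<open>The ordinal kappa > 0 is represented by a (nonempty) well-ordered index type 'i:
its elements are exactly the ordinals alpha < kappa. The family of preorders is
sq :: 'i => 'a => 'a => bool, where sq alpha x y means x below_alpha y.\<close>

definition eqa :: "('i \<Rightarrow> 'a \<Rightarrow> 'a \<Rightarrow> bool) \<Rightarrow> 'i \<Rightarrow> 'a \<Rightarrow> 'a \<Rightarrow> bool" where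
  "eqa sq \<alpha> x y \<longleftrightarrow> sq \<alpha> x y \<and> sq \<alpha> y x"

definition lta :: "('i \<Rightarrow> 'a \<Rightarrow> 'a \<Rightarrow> bool) \<Rightarrow> 'i \<Rightarrow> 'a \<Rightarrow> 'a \<Rightarrow> bool" where
  "lta sq \<alpha> x y \<longleftrightarrow> sq \<alpha> x y \<and> \<not> eqa sq \<alpha> x y"

definition down :: "('i::wellorder \<Rightarrow> 'a \<Rightarrow> 'a \<Rightarrow> bool) \<Rightarrow> 'a \<Rightarrow> 'i \<Rightarrow> 'a set" where
  "down sq x \<alpha> = {y. \<forall>\<beta><\<alpha>. eqa sq \<beta> x y}"

definition model_A14 :: "('i::wellorder \<Rightarrow> 'a::complete_lattice \<Rightarrow> 'a \<Rightarrow> bool) \<Rightarrow> bool" where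
  "model_A14 sq \<longleftrightarrow>
     (\<forall>\<alpha>. reflp (sq \<alpha>) \<and> transp (sq \<alpha>)) \<and>
     (\<forall>\<alpha> \<beta> x y. \<alpha> < \<beta> \<longrightarrow> sq \<beta> x y \<longrightarrow> eqa sq \<alpha> x y) \<and>
     (\<forall>x y. (\<forall>\<alpha>. eqa sq \<alpha> x y) \<longleftrightarrow> x = y) \<and>
     (\<forall>x \<alpha> X. X \<subseteq> down sq x \<alpha> \<longrightarrow>
        (\<exists>y\<in>down sq x \<alpha>. (\<forall>w\<in>X. sq \<alpha> w y) \<and>
           (\<forall>z\<in>down sq x \<alpha>. (\<forall>w\<in>X. sq \<alpha> w z) \<longrightarrow> sq \<alpha> y z \<and> y \<le> z))) \<and>
     (\<forall>X \<alpha> y. X \<noteq> {} \<longrightarrow> (\<forall>x\<in>X. eqa sq \<alpha> y x) \<longrightarrow> eqa sq \<alpha> y (Sup X))"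

text \<open>The element of Axiom 3 for x, alpha, X (unique when X is a subset of (x]_alpha).\<close>
definition bsup :: "('i::wellorder \<Rightarrow> 'a::complete_lattice \<Rightarrow> 'a \<Rightarrow> bool) \<Rightarrow> 'i \<Rightarrow> 'a \<Rightarrow> 'a set \<Rightarrow> 'a" where
  "bsup sq \<alpha> x X = (THE y. y \<in> down sq x \<alpha> \<and> (\<forall>w\<in>X. sq \<alpha> w y) \<and>
           (\<forall>z\<in>down sq x \<alpha>. (\<forall>w\<in>X. sq \<alpha> w z) \<longrightarrow> sq \<alpha> y z \<and> y \<le> z))"

definition slice :: "('i::wellorder \<Rightarrow> 'a::complete_lattice \<Rightarrow> 'a \<Rightarrow> bool) \<Rightarrow> 'i \<Rightarrow> 'a \<Rightarrow> 'a" where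
  "slice sq \<alpha> x = bsup sq \<alpha> x {x}"

end

theory Submission
  imports Defs
begin

lemma m_refl: "model_A14 sq \<Longrightarrow> sq \<beta> u u"
  unfolding model_A14_def by (meson reflpD)
lemma m_trans: "model_A14 sq \<Longrightarrow> sq \<beta> u v \<Longrightarrow> sq \<beta> v w \<Longrightarrow> sq \<beta> u w"
  unfolding model_A14_def by (meson transpD)
lemma m_a1: "model_A14 sq \<Longrightarrow> \<beta> < \<gamma> \<Longrightarrow> sq \<gamma> u v \<Longrightarrow> eqa sq \<beta> u v"
  unfolding model_A14_def by meson
lemma m_a3: "model_A14 sq \<Longrightarrow> X \<subseteq> down sq x \<alpha> \<Longrightarrow>
        (\<exists>y\<in>down sq x \<alpha>. (\<forall>w\<in>X. sq \<alpha> w y) \<and>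
           (\<forall>z\<in>down sq x \<alpha>. (\<forall>w\<in>X. sq \<alpha> w z) \<longrightarrow> sq \<alpha> y z \<and> y \<le> z))"
  unfolding model_A14_def
  apply (drule conjunct2, drule conjunct2, drule conjunct2, drule conjunct1)
  apply (erule allE[where x=x], erule allE[where x=\<alpha>], erule allE[where x=X])
  by (erule mp)

lemma slice_props:
  fixes sq :: "'i::wellorder \<Rightarrow> 'a::complete_lattice \<Rightarrow> 'a \<Rightarrow> bool"
  assumes m: "model_A14 sq"
  shows "slice sq \<alpha> x \<in> down sq x \<alpha> \<and> sq \<alpha> x (slice sq \<alpha> x) \<and>
     (\<forall>z\<in>down sq x \<alpha>. sq \<alpha> x z \<longrightarrow> sq \<alpha> (slice sq \<alpha> x) z \<and> slice sq \<alpha> x \<le> z)"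
proof -
  have refl: "\<And>\<beta> u. sq \<beta> u u" using m by (rule m_refl)
  have sub: "{x} \<subseteq> down sq x \<alpha>" using refl by (auto simp: down_def eqa_def)
  from m_a3[OF m sub] obtain y where y: "y \<in> down sq x \<alpha>" "\<forall>w\<in>{x}. sq \<alpha> w y"
    "\<forall>z\<in>down sq x \<alpha>. (\<forall>w\<in>{x}. sq \<alpha> w z) \<longrightarrow> sq \<alpha> y z \<and> y \<le> z"
    by blast
  let ?P = "\<lambda>y. y \<in> down sq x \<alpha> \<and> (\<forall>w\<in>{x}. sq \<alpha> w y) \<and>
           (\<forall>z\<in>down sq x \<alpha>. (\<forall>w\<in>{x}. sq \<alpha> w z) \<longrightarrow> sq \<alpha> y z \<and> y \<le> z)"
  have "?P y" using y by blast
  moreover have "\<And>y'. ?P y' \<Longrightarrow> y' = y"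
  proof -
    fix y' assume h: "?P y'"
    have "y' \<le> y" using h y(1,2) by simp
    moreover have "y \<le> y'" using h y(3) by simp
    ultimately show "y' = y" by (rule antisym)
  qed
  ultimately have "(THE y. ?P y) = y" by (rule the_equality)
  hence "slice sq \<alpha> x = y" unfolding slice_def bsup_def .
  thus ?thesis using y by auto
qed

theorem mainTheorem7:
  fixes sq :: "'i::wellorder \<Rightarrow> 'a::complete_lattice \<Rightarrow> 'a \<Rightarrow> bool"
  assumes "model_A14 sq"
  shows "(eqa sq \<alpha> x y \<longleftrightarrow> eqa sq \<alpha> (slice sq \<alpha> x) (slice sq \<alpha> y)) \<and>
         (eqa sq \<alpha> (slice sq \<alpha> x) (slice sq \<alpha> y) \<longleftrightarrow> slice sq \<alpha> x = slice sq \<alpha> y) \<and>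
         (lta sq \<alpha> x y \<longleftrightarrow> lta sq \<alpha> (slice sq \<alpha> x) (slice sq \<alpha> y)) \<and>
         (sq \<alpha> x y \<longleftrightarrow> sq \<alpha> (slice sq \<alpha> x) (slice sq \<alpha> y))"
proof -
  have refl: "\<And>\<beta> u. sq \<beta> u u" using assms by (rule m_refl)
  have tr: "\<And>\<beta> u v w. sq \<beta> u v \<Longrightarrow> sq \<beta> v w \<Longrightarrow> sq \<beta> u w"
    using assms by (rule m_trans)
  have a1: "\<And>\<beta> \<gamma> u v. \<beta> < \<gamma> \<Longrightarrow> sq \<gamma> u v \<Longrightarrow> eqa sq \<beta> u v"
    using assms by (rule m_a1)
  define sx where "sx = slice sq \<alpha> x"
  define sy where "sy = slice sq \<alpha> y"
  have px: "sx \<in> down sq x \<alpha> \<and> sq \<alpha> x sx \<and>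
     (\<forall>z\<in>down sq x \<alpha>. sq \<alpha> x z \<longrightarrow> sq \<alpha> sx z \<and> sx \<le> z)"
    using slice_props[OF assms] sx_def by blast
  have py: "sy \<in> down sq y \<alpha> \<and> sq \<alpha> y sy \<and>
     (\<forall>z\<in>down sq y \<alpha>. sq \<alpha> y z \<longrightarrow> sq \<alpha> sy z \<and> sy \<le> z)"
    using slice_props[OF assms] sy_def by blast
  have xd: "x \<in> down sq x \<alpha>" and yd: "y \<in> down sq y \<alpha>"
    using refl by (auto simp: down_def eqa_def)
  have ex: "eqa sq \<alpha> x sx" using px xd refl unfolding eqa_def by blast
  have ey: "eqa sq \<alpha> y sy" using py yd refl unfolding eqa_def by blast
  have key: "sq \<alpha> x y \<longleftrightarrow> sq \<alpha> sx sy"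
    using ex ey tr unfolding eqa_def by blast
  have key2: "sq \<alpha> y x \<longleftrightarrow> sq \<alpha> sy sx"
    using ex ey tr unfolding eqa_def by blast
  have eq: "eqa sq \<alpha> x y \<Longrightarrow> sx = sy"
  proof -
    assume e: "eqa sq \<alpha> x y"
    have dd: "down sq x \<alpha> = down sq y \<alpha>"
    proof -
      have b: "\<And>\<beta>. \<beta> < \<alpha> \<Longrightarrow> eqa sq \<beta> x y" using e a1 unfolding eqa_def by blast
      show ?thesis unfolding down_def
      proof (intro set_eqI iffI; simp)
        fix u assume "\<forall>\<beta><\<alpha>. eqa sq \<beta> x u"
        thus "\<forall>\<beta><\<alpha>. eqa sq \<beta> y u" using b tr unfolding eqa_def by meson
      next
        fix u assume "\<forall>\<beta><\<alpha>. eqa sq \<beta> y u"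
        thus "\<forall>\<beta><\<alpha>. eqa sq \<beta> x u" using b tr unfolding eqa_def by meson
      qed
    qed
    have "sq \<alpha> x sy" using e py tr unfolding eqa_def by blast
    hence "sx \<le> sy" using px py dd by blast
    moreover have "sq \<alpha> y sx" using e px tr unfolding eqa_def by blast
    hence "sy \<le> sx" using px py dd by blast
    ultimately show "sx = sy" by (rule antisym)
  qed
  have E: "eqa sq \<alpha> x y \<longleftrightarrow> eqa sq \<alpha> sx sy" using key key2 unfolding eqa_def by blast
  have E2: "eqa sq \<alpha> sx sy \<longleftrightarrow> sx = sy" using E eq refl unfolding eqa_def by blast
  have L: "lta sq \<alpha> x y \<longleftrightarrow> lta sq \<alpha> sx sy" using E key unfolding lta_def by blast
  show ?thesis using E E2 L key unfolding sx_def sy_def by blast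
qed

end
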